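(* Let $\chi,m\geq 2$ be integers. Then there exists a constant $\gamma=\gamma(\chi,m)>0$ such that the following holds. Let $F$ be a subhypergraph of a tournament hypergraph associated to $TT_\chi$, with vertex classes $V_1,\dots,V_\chi$. If $|V_i|\geq 1/\gamma$ for each $i\in[\chi]$ and $d(V_i,V_i,V_j)\geq 1-\gamma$ for every arc $(i,j)$ of $TT_\chi$, then $F$ contains a copy of $H(TT_\chi,m)$.
   Context: $TT_\chi$ is the transitive tournament on $[\chi]$. A 3-uniform hypergraph is a tournament hypergraph associated to a tournament $T_\chi$ on $[\chi]$ if its vertex set is partitioned into classes $A_1,\dots,A_\chi$ and its edges are exactly the triples $xyz$ with $x,y\in A_i$, $z\in A_j$, $(i,j)$ an arc of $T_\chi$; $H(T_\chi,m)$ is such a hypergraph with all classes of size $m$. For a 3-graph $F$ and $A,B,C\subseteq V(F)$, $E(A,B,C)$ is the set of ordered triples $(a,b,c)\in A\times B\times C$ of distinct vertices with $abc\in E(F)$, and $d(A,B,C)=|E(A,B,C)|$ divided by the number of ordered triples of distinct vertices in $A\times B\times C$. *)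

theory Defs
  imports Complex_Main
begin

text \<open>Vertex classes are indexed by 0..chi-1 (the paper's [chi] shifted by one).
  A tournament on {0..<chi} is a set of arcs (i,j).\<close>

definition is_tournament :: "nat \<Rightarrow> (nat \<times> nat) set \<Rightarrow> bool" where
  "is_tournament chi T \<longleftrightarrow> T \<subseteq> {0..<chi} \<times> {0..<chi} \<and>
     (\<forall>i<chi. \<forall>j<chi. i \<noteq> j \<longrightarrow> ((i,j) \<in> T \<longleftrightarrow> (j,i) \<notin> T)) \<and>
     (\<forall>i. (i,i) \<notin> T)"

definition TT :: "nat \<Rightarrow> (nat \<times> nat) set" where
  "TT chi = {(i,j). i < j \<and> j < chi}"

definition tourn_edges :: "nat \<Rightarrow> (nat \<times> nat) set \<Rightarrow> (nat \<Rightarrow> 'a set) \<Rightarrow> 'a set set" where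
  "tourn_edges chi T A = {{x,y,z} | x y z i j. (i,j) \<in> T \<and> i < chi \<and> j < chi \<and>
       x \<in> A i \<and> y \<in> A i \<and> x \<noteq> y \<and> z \<in> A j}"

definition classes_partition :: "nat \<Rightarrow> (nat \<Rightarrow> 'a set) \<Rightarrow> bool" where
  "classes_partition chi A \<longleftrightarrow> (\<forall>i<chi. \<forall>j<chi. i \<noteq> j \<longrightarrow> A i \<inter> A j = {})"

definition is_tournament_hypergraph ::
  "nat \<Rightarrow> (nat \<times> nat) set \<Rightarrow> (nat \<Rightarrow> 'a set) \<Rightarrow> 'a set \<Rightarrow> 'a set set \<Rightarrow> bool" where
  "is_tournament_hypergraph chi T A VF EF \<longleftrightarrow> is_tournament chi T \<and> classes_partition chi A \<and>
     VF = (\<Union>i<chi. A i) \<and> EF = tourn_edges chi T A"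

definition H_verts :: "nat \<Rightarrow> nat \<Rightarrow> (nat \<times> nat) set" where
  "H_verts chi m = {0..<chi} \<times> {0..<m}"

definition H_edges :: "nat \<Rightarrow> (nat \<times> nat) set \<Rightarrow> nat \<Rightarrow> (nat \<times> nat) set set" where
  "H_edges chi T m = tourn_edges chi T (\<lambda>i. {i} \<times> {0..<m})"

definition contains_copy :: "'a set \<Rightarrow> 'a set set \<Rightarrow> 'b set \<Rightarrow> 'b set set \<Rightarrow> bool" where
  "contains_copy VF EF VH EH \<longleftrightarrow>
     (\<exists>f. inj_on f VH \<and> f ` VH \<subseteq> VF \<and> (\<forall>e\<in>EH. f ` e \<in> EF))"

definition distinct_triples :: "'a set \<Rightarrow> 'a set \<Rightarrow> 'a set \<Rightarrow> ('a \<times> 'a \<times> 'a) set" where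
  "distinct_triples A B C = {(a,b,c). a \<in> A \<and> b \<in> B \<and> c \<in> C \<and> a \<noteq> b \<and> a \<noteq> c \<and> b \<noteq> c}"

definition edge_triples :: "'a set set \<Rightarrow> 'a set \<Rightarrow> 'a set \<Rightarrow> 'a set \<Rightarrow> ('a \<times> 'a \<times> 'a) set" where
  "edge_triples EF A B C = {(a,b,c) \<in> distinct_triples A B C. {a,b,c} \<in> EF}"

definition density :: "'a set set \<Rightarrow> 'a set \<Rightarrow> 'a set \<Rightarrow> 'a set \<Rightarrow> real" where
  "density EF A B C = real (card (edge_triples EF A B C)) / real (card (distinct_triples A B C))"

end

theory Submission imports Defs "HOL-Library.FuncSet" begin

lemma card_PiE_triple:
  assumes I: "finite I" and pqr: "p\<in>I" "q\<in>I" "r\<in>I" "p\<noteq>q" "p\<noteq>r" "q\<noteq>r"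
    and S: "\<forall>i\<in>I. finite (S i)"
  shows "card {f \<in> PiE I S. (f p, f q, f r) \<in> B} * (card (S p) * card (S q) * card (S r))
       = card (B \<inter> S p \<times> S q \<times> S r) * card (PiE I S)"
proof -
  define J where "J = I - {p,q,r}"
  have bij: "bij_betw (\<lambda>f. ((f p, f q, f r), restrict f J)) {f \<in> PiE I S. (f p, f q, f r) \<in> B'}
       ((B' \<inter> S p \<times> S q \<times> S r) \<times> PiE J S)" for B'
  proof (rule bij_betw_byWitness[where f' = "\<lambda>((a,b,c),h). h(p:=a, q:=b, r:=c)"])
    show "\<forall>f\<in>{f \<in> PiE I S. (f p, f q, f r) \<in> B'}.
        (\<lambda>((a,b,c),h). h(p:=a, q:=b, r:=c)) ((f p, f q, f r), restrict f J) = f"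
      using pqr by (auto simp: J_def fun_eq_iff PiE_def extensional_def)
    show "\<forall>y\<in>(B' \<inter> S p \<times> S q \<times> S r) \<times> PiE J S.
       (\<lambda>f. ((f p, f q, f r), restrict f J)) ((\<lambda>((a,b,c),h). h(p:=a, q:=b, r:=c)) y) = y"
      using pqr by (auto simp: J_def fun_eq_iff PiE_def extensional_def)
    show "(\<lambda>f. ((f p, f q, f r), restrict f J)) ` {f \<in> PiE I S. (f p, f q, f r) \<in> B'}
       \<subseteq> (B' \<inter> S p \<times> S q \<times> S r) \<times> PiE J S"
      using pqr by (auto simp: J_def PiE_def extensional_def)
    show "(\<lambda>((a,b,c),h). h(p:=a, q:=b, r:=c)) ` ((B' \<inter> S p \<times> S q \<times> S r) \<times> PiE J S)
       \<subseteq> {f \<in> PiE I S. (f p, f q, f r) \<in> B'}"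
      using pqr by (auto simp: J_def PiE_def extensional_def)
  qed
  have c1: "card {f \<in> PiE I S. (f p, f q, f r) \<in> B} = card (B \<inter> S p \<times> S q \<times> S r) * card (PiE J S)"
    using bij_betw_same_card[OF bij[of B]] by (simp add: card_cartesian_product)
  have c2: "card {f \<in> PiE I S. (f p, f q, f r) \<in> UNIV} = card (UNIV \<inter> S p \<times> S q \<times> S r) * card (PiE J S)"
    using bij_betw_same_card[OF bij[of UNIV]] by (simp add: card_cartesian_product)
  hence "card (PiE I S) = card (S p) * card (S q) * card (S r) * card (PiE J S)"
    by (simp add: card_cartesian_product)
  thus ?thesis using c1 by simp
qed

lemma card_PiE_pair:
  assumes I: "finite I" and pqr: "p\<in>I" "q\<in>I" "p\<noteq>q"
  shows "card {f \<in> PiE I S. (f p, f q) \<in> B} * (card (S p) * card (S q))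
       = card (B \<inter> S p \<times> S q) * card (PiE I S)"
proof -
  define J where "J = I - {p,q}"
  have bij: "bij_betw (\<lambda>f. ((f p, f q), restrict f J)) {f \<in> PiE I S. (f p, f q) \<in> B'}
       ((B' \<inter> S p \<times> S q) \<times> PiE J S)" for B'
  proof (rule bij_betw_byWitness[where f' = "\<lambda>((a,b),h). h(p:=a, q:=b)"])
    show "\<forall>f\<in>{f \<in> PiE I S. (f p, f q) \<in> B'}.
        (\<lambda>((a,b),h). h(p:=a, q:=b)) ((f p, f q), restrict f J) = f"
      using pqr by (auto simp: J_def fun_eq_iff PiE_def extensional_def)
    show "\<forall>y\<in>(B' \<inter> S p \<times> S q) \<times> PiE J S.
       (\<lambda>f. ((f p, f q), restrict f J)) ((\<lambda>((a,b),h). h(p:=a, q:=b)) y) = y"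
      using pqr by (auto simp: J_def fun_eq_iff PiE_def extensional_def)
    show "(\<lambda>f. ((f p, f q), restrict f J)) ` {f \<in> PiE I S. (f p, f q) \<in> B'}
       \<subseteq> (B' \<inter> S p \<times> S q) \<times> PiE J S"
      using pqr by (auto simp: J_def PiE_def extensional_def)
    show "(\<lambda>((a,b),h). h(p:=a, q:=b)) ` ((B' \<inter> S p \<times> S q) \<times> PiE J S)
       \<subseteq> {f \<in> PiE I S. (f p, f q) \<in> B'}"
      using pqr by (auto simp: J_def PiE_def extensional_def)
  qed
  have c1: "card {f \<in> PiE I S. (f p, f q) \<in> B} = card (B \<inter> S p \<times> S q) * card (PiE J S)"
    using bij_betw_same_card[OF bij[of B]] by (simp add: card_cartesian_product)
  have c2: "card {f \<in> PiE I S. (f p, f q) \<in> UNIV} = card (UNIV \<inter> S p \<times> S q) * card (PiE J S)"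
    using bij_betw_same_card[OF bij[of UNIV]] by (simp add: card_cartesian_product)
  hence "card (PiE I S) = card (S p) * card (S q) * card (PiE J S)"
    by (simp add: card_cartesian_product)
  thus ?thesis using c1 by simp
qed


theorem lemma5p4:
  fixes chi m :: nat
  assumes "chi \<ge> 2" and "m \<ge> 2"
  shows "\<exists>\<gamma>::real. \<gamma> > 0 \<and>
    (\<forall>(V :: nat \<Rightarrow> nat set) (EF :: nat set set) (A :: nat \<Rightarrow> nat set) VT ET.
       is_tournament_hypergraph chi (TT chi) A VT ET \<and>
       (\<forall>i<chi. V i \<subseteq> A i) \<and> EF \<subseteq> ET \<and> EF \<subseteq> Pow (\<Union>i<chi. V i) \<and>
       (\<forall>i<chi. finite (V i) \<and> real (card (V i)) \<ge> 1 / \<gamma>) \<and>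
       (\<forall>(i,j)\<in>TT chi. density EF (V i) (V i) (V j) \<ge> 1 - \<gamma>)
       \<longrightarrow> contains_copy (\<Union>i<chi. V i) EF (H_verts chi m) (H_edges chi (TT chi) m))"
proof -
  define K :: nat where "K = chi*m*m + chi*chi*m*m*m"
  define \<gamma> :: real where "\<gamma> = 1 / (K + 1)"
  have gpos: "\<gamma> > 0" by (simp add: \<gamma>_def)
  have Kg: "K * \<gamma> < 1" by (simp add: \<gamma>_def)
  show ?thesis
  proof (intro exI[of _ \<gamma>] conjI gpos allI impI)
    fix V :: "nat \<Rightarrow> nat set" and EF :: "nat set set" and A :: "nat \<Rightarrow> nat set" and VT ET
    assume H: "is_tournament_hypergraph chi (TT chi) A VT ET \<and>
       (\<forall>i<chi. V i \<subseteq> A i) \<and> EF \<subseteq> ET \<and> EF \<subseteq> Pow (\<Union>i<chi. V i) \<and>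
       (\<forall>i<chi. finite (V i) \<and> real (card (V i)) \<ge> 1 / \<gamma>) \<and>
       (\<forall>(i,j)\<in>TT chi. density EF (V i) (V i) (V j) \<ge> 1 - \<gamma>)"
    have Ht: "is_tournament_hypergraph chi (TT chi) A VT ET" using H by (elim conjE) assumption
    have Hs: "\<forall>i<chi. V i \<subseteq> A i" using H by (elim conjE) assumption
    have Hf: "\<forall>i<chi. finite (V i) \<and> real (card (V i)) \<ge> 1 / \<gamma>" using H by (elim conjE) assumption
    have Hd: "\<forall>(i,j)\<in>TT chi. density EF (V i) (V i) (V j) \<ge> 1 - \<gamma>" using H by (elim conjE) assumption
    have cp: "classes_partition chi A" using Ht unfolding is_tournament_hypergraph_def by simp
    have disj: "V i \<inter> V j = {}" if "i < chi" "j < chi" "i \<noteq> j" for i j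
    proof -
      have "A i \<inter> A j = {}" using cp that unfolding classes_partition_def by simp
      moreover have "V i \<subseteq> A i" "V j \<subseteq> A j" using Hs that by auto
      ultimately show ?thesis by blast
    qed
    have fin: "finite (V i)" if "i < chi" for i using Hf that by simp
    have big: "real (card (V i)) \<ge> 1 / \<gamma>" if "i < chi" for i using Hf that by simp
    have inv: "1 / real (card (V i)) \<le> \<gamma>" if "i < chi" for i
    proof -
      have "1/\<gamma> > 0" using gpos by simp
      hence "real (card (V i)) > 0" using big[OF that] by linarith
      thus ?thesis using big[OF that] gpos by (simp add: field_simps)
    qed
    have npos: "card (V i) > 0" if "i < chi" for i
    proof -
      have "1/\<gamma> > 0" using gpos by simp
      thus ?thesis using big[OF that] by (metis of_nat_0_less_iff less_le_trans)
    qed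
    have dens: "density EF (V i) (V i) (V j) \<ge> 1 - \<gamma>" if "i < j" "j < chi" for i j
      using Hd that unfolding TT_def by auto
    define I where "I = H_verts chi m"
    define S :: "nat \<times> nat \<Rightarrow> nat set" where "S = (\<lambda>(i,k). V i)"
    define P where "P = PiE I S"
    define N where "N = card P"
    have finI: "finite I" unfolding I_def H_verts_def by simp
    have Npos: "N > 0" unfolding N_def P_def
      by (subst card_PiE[OF finI], rule prod_pos) (auto simp: I_def H_verts_def S_def npos)
    define D where "D i j = distinct_triples (V i) (V i) (V j)" for i j
    define Et where "Et i j = edge_triples EF (V i) (V i) (V j)" for i j
    define B1 where "B1 = (\<lambda>(i,a,b). {f \<in> P. (f (i,a), f (i,b)) \<in> {(x,y). x = y}})"
    define B2 where "B2 = (\<lambda>(i,j,a,b,c). {f \<in> P. (f (i,a), f (i,b), f (j,c)) \<in> D i j - Et i j})"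
    define E1 where "E1 = {(i,a,b). i < chi \<and> a < m \<and> b < m \<and> a \<noteq> b}"
    define E2 where "E2 = {(i,j,a,b,c). i < j \<and> j < chi \<and> a < m \<and> b < m \<and> c < m \<and> a \<noteq> b}"
    have cB1: "real (card (B1 e)) \<le> \<gamma> * N" if "e \<in> E1" for e
    proof -
      obtain i a b where e0: "e = (i,a,b)" by (cases e) auto
      hence e: "e = (i,a,b)" "i < chi" "a < m" "b < m" "a \<noteq> b"
        using that unfolding E1_def by auto
      have "card (B1 e) * (card (S (i,a)) * card (S (i,b))) =
         card ({(x,y). x = y} \<inter> S (i,a) \<times> S (i,b)) * N"
        unfolding e B1_def N_def P_def prod.case
        by (rule card_PiE_pair[OF finI]) (use e in \<open>auto simp: I_def H_verts_def\<close>)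
      moreover have "{(x,y). x = y} \<inter> S (i,a) \<times> S (i,b) = (\<lambda>x. (x,x)) ` V i"
        by (auto simp: S_def)
      moreover have "card ((\<lambda>x. (x,x)) ` V i) = card (V i)"
        by (rule card_image) (auto simp: inj_on_def)
      ultimately have "card (B1 e) * (card (V i) * card (V i)) = card (V i) * N"
        by (simp add: S_def)
      hence "card (B1 e) * card (V i) = N" using npos[OF e(2)] by simp
      hence "real (card (B1 e)) = N * (1 / card (V i))"
        using npos[OF e(2)] by (simp add: field_simps flip: of_nat_mult)
      also have "\<dots> \<le> N * \<gamma>" using inv[OF e(2)] by (intro mult_left_mono) auto
      finally show ?thesis by (simp add: mult.commute)
    qed
    have cB2: "real (card (B2 e)) \<le> \<gamma> * N" if "e \<in> E2" for e
    proof -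
      obtain i j a b c where e0: "e = (i,j,a,b,c)" by (cases e) auto
      hence e: "e = (i,j,a,b,c)" "i < j" "j < chi" "a < m" "b < m" "c < m" "a \<noteq> b"
        using that unfolding E2_def by auto
      have ic: "i < chi" using e by simp
      have sub: "D i j \<subseteq> V i \<times> V i \<times> V j" by (auto simp: D_def distinct_triples_def)
      have EtD: "Et i j \<subseteq> D i j" by (auto simp: D_def Et_def edge_triples_def)
      have finD: "finite (D i j)" using sub fin[OF ic] fin[OF e(3)] finite_subset by blast
      have "card (B2 e) * (card (S (i,a)) * card (S (i,b)) * card (S (j,c))) =
         card ((D i j - Et i j) \<inter> S (i,a) \<times> S (i,b) \<times> S (j,c)) * N"
        unfolding e B2_def N_def P_def prod.case
        by (rule card_PiE_triple[OF finI]) (use e in \<open>auto simp: I_def H_verts_def S_def fin\<close>)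
      hence eq: "card (B2 e) * (card (V i) * card (V i) * card (V j)) = card (D i j - Et i j) * N"
        using sub by (simp add: S_def Int_absorb2 Diff_subset[THEN subset_trans])
      have cDE: "real (card (D i j - Et i j)) \<le> \<gamma> * (card (V i) * card (V i) * card (V j))"
      proof (cases "card (D i j) = 0")
        case True
        hence "card (D i j - Et i j) = 0" using finD
          by (metis card_0_eq finite_Diff Diff_empty empty_Diff)
        thus ?thesis using gpos by simp
      next
        case False
        have "density EF (V i) (V i) (V j) = card (Et i j) / card (D i j)"
          by (simp add: density_def D_def Et_def)
        hence "card (Et i j) / card (D i j) \<ge> 1 - \<gamma>" using dens[OF e(2,3)] by simp
        hence "real (card (Et i j)) \<ge> (1 - \<gamma>) * card (D i j)" using False
          by (simp add: field_simps)
        moreover have "card (D i j - Et i j) = card (D i j) - card (Et i j)"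
          using EtD finD by (simp add: card_Diff_subset finite_subset)
        moreover have "card (Et i j) \<le> card (D i j)" using EtD finD card_mono by blast
        moreover have "card (D i j) \<le> card (V i) * card (V i) * card (V j)"
          using card_mono[OF _ sub] fin[OF ic] fin[OF e(3)] by (simp add: card_cartesian_product)
        ultimately show ?thesis using gpos
          by (simp add: of_nat_diff algebra_simps)
             (smt (verit) mult_left_mono of_nat_le_iff of_nat_mult)
      qed
      have pp: "real (card (V i) * card (V i) * card (V j)) > 0"
        using npos[OF ic] npos[OF e(3)] by simp
      have "real (card (B2 e)) * real (card (V i) * card (V i) * card (V j))
           = real (card (D i j - Et i j)) * N" using eq by (metis of_nat_mult)
      also have "\<dots> \<le> \<gamma> * (card (V i) * card (V i) * card (V j)) * N"
        using cDE by (intro mult_right_mono) auto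
      finally have "real (card (B2 e)) * real (card (V i) * card (V i) * card (V j))
          \<le> (\<gamma> * N) * real (card (V i) * card (V i) * card (V j))" by (simp add: algebra_simps)
      thus ?thesis using pp by (rule mult_right_le_imp_le)
    qed
    have finE1: "finite E1" and cE1: "card E1 \<le> chi*m*m"
    proof -
      have s: "E1 \<subseteq> {..<chi} \<times> {..<m} \<times> {..<m}" by (auto simp: E1_def)
      show "finite E1" using s by (rule finite_subset) simp
      show "card E1 \<le> chi*m*m" using card_mono[OF _ s] by (simp add: card_cartesian_product)
    qed
    have finE2: "finite E2" and cE2: "card E2 \<le> chi*chi*m*m*m"
    proof -
      have s: "E2 \<subseteq> {..<chi} \<times> {..<chi} \<times> {..<m} \<times> {..<m} \<times> {..<m}" by (auto simp: E2_def)
      show "finite E2" using s by (rule finite_subset) simp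
      show "card E2 \<le> chi*chi*m*m*m" using card_mono[OF _ s] by (simp add: card_cartesian_product)
    qed
    define Bad where "Bad = (\<Union>e\<in>E1. B1 e) \<union> (\<Union>e\<in>E2. B2 e)"
    have "real (card Bad) \<le> real (card (\<Union>e\<in>E1. B1 e)) + real (card (\<Union>e\<in>E2. B2 e))"
      unfolding Bad_def using card_Un_le of_nat_le_iff of_nat_add by metis
    also have "\<dots> \<le> (\<Sum>e\<in>E1. real (card (B1 e))) + (\<Sum>e\<in>E2. real (card (B2 e)))"
      using card_UN_le[OF finE1, of B1] card_UN_le[OF finE2, of B2]
      by (intro add_mono) (simp_all flip: of_nat_sum)
    also have "\<dots> \<le> (\<Sum>e\<in>E1. \<gamma> * N) + (\<Sum>e\<in>E2. \<gamma> * N)"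
      using cB1 cB2 by (intro add_mono sum_mono) auto
    also have "\<dots> = (card E1 + card E2) * \<gamma> * N" by (simp add: algebra_simps)
    also have "\<dots> \<le> K * \<gamma> * N"
    proof -
      have "card E1 + card E2 \<le> K" using cE1 cE2 unfolding K_def by simp
      hence "real (card E1 + card E2) \<le> real K" by (simp only: of_nat_le_iff)
      thus ?thesis using gpos by (intro mult_right_mono) auto
    qed
    also have "\<dots> < N" using Kg Npos by simp
    finally have "card Bad < card P" unfolding N_def by simp
    moreover have "Bad \<subseteq> P" unfolding Bad_def B1_def B2_def by auto
    ultimately have "\<not> P \<subseteq> Bad" by auto
    then obtain f where fP: "f \<in> P" and fB: "f \<notin> Bad" by blast
    have fV: "f (i,a) \<in> V i" if "i < chi" "a < m" for i a
      using fP that by (auto simp: P_def I_def H_verts_def S_def PiE_def Pi_def)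
    have ne: "f (i,a) \<noteq> f (i,b)" if "i < chi" "a < m" "b < m" "a \<noteq> b" for i a b
    proof
      assume "f (i,a) = f (i,b)"
      hence "f \<in> B1 (i,a,b)" using fP by (simp add: B1_def)
      moreover have "(i,a,b) \<in> E1" using that by (simp add: E1_def)
      ultimately have "f \<in> Bad" unfolding Bad_def by blast
      thus False using fB by contradiction
    qed
    have ok: "(f (i,a), f (i,b), f (j,c)) \<notin> D i j - Et i j"
      if "i < j" "j < chi" "a < m" "b < m" "c < m" "a \<noteq> b" for i j a b c
    proof
      assume "(f (i,a), f (i,b), f (j,c)) \<in> D i j - Et i j"
      hence "f \<in> B2 (i,j,a,b,c)" using fP by (simp add: B2_def)
      moreover have "(i,j,a,b,c) \<in> E2" using that by (simp add: E2_def)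
      ultimately have "f \<in> Bad" unfolding Bad_def by blast
      thus False using fB by contradiction
    qed
    show "contains_copy (\<Union>i<chi. V i) EF (H_verts chi m) (H_edges chi (TT chi) m)"
      unfolding contains_copy_def
    proof (intro exI[of _ f] conjI)
      show "inj_on f (H_verts chi m)"
      proof (rule inj_onI)
        fix x y assume xy: "x \<in> H_verts chi m" "y \<in> H_verts chi m" "f x = f y"
        obtain i a where x: "x = (i,a)" "i < chi" "a < m" using xy by (auto simp: H_verts_def)
        obtain j b where y: "y = (j,b)" "j < chi" "b < m" using xy by (auto simp: H_verts_def)
        show "x = y"
        proof (cases "i = j")
          case True thus ?thesis using ne[of i a b] x y xy by auto
        next
          case False thus ?thesis using disj[OF x(2) y(2) False] fV[OF x(2,3)] fV[OF y(2,3)] x y xy by auto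
        qed
      qed
      show "f ` H_verts chi m \<subseteq> (\<Union>i<chi. V i)" using fV by (auto simp: H_verts_def)
      show "\<forall>e\<in>H_edges chi (TT chi) m. f ` e \<in> EF"
      proof
        fix e assume "e \<in> H_edges chi (TT chi) m"
        then obtain i j a b c where e: "e = {(i,a),(i,b),(j,c)}" "i < j" "j < chi"
           "a < m" "b < m" "c < m" "a \<noteq> b"
          unfolding H_edges_def tourn_edges_def TT_def by auto
        have ic: "i < chi" using e by simp
        have "(f (i,a), f (i,b), f (j,c)) \<in> D i j"
          unfolding D_def distinct_triples_def
          using fV[OF ic e(4)] fV[OF ic e(5)] fV[OF e(3) e(6)] ne[OF ic e(4,5,7)]
            disj[OF ic e(3)] e(2) by auto
        hence "(f (i,a), f (i,b), f (j,c)) \<in> Et i j" using ok[OF e(2-7)] by blast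
        thus "f ` e \<in> EF" using e(1) by (auto simp: Et_def edge_triples_def)
      qed
    qed
  qed
qed

end
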